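(* Let $F$ be a field and $t,p$ positive integers with $p\mid t$. Let $M$ be a $t\times t$ $(t,p)$ block invertible square matrix over $F$, let $X$ be a $p\times t$ matrix over $F$ that is block invertible with block size $p$, and let $Y$ be a $t\times p$ matrix over $F$ that is block invertible with block size $p$. Suppose $W$ is an invertible $p\times p$ matrix over $F$ such that $XM^{-1}Y+W$ is invertible. Then the $(t+p)\times(t+p)$ matrix $$N=\begin{pmatrix} M & Y\\ X & XM^{-1}Y+W\end{pmatrix}$$ is a $(t+p,p)$ block invertible square matrix. Moreover, for any such $M,X,Y$, an invertible $W$ with $XM^{-1}Y+W$ invertible exists provided $p>1$.
   Context: For positive integers $a,b,p$ with $p\mid a$ and $p\mid b$, an $a\times b$ matrix (with $a$ rows and $b$ columns) over $F$ is partitioned into $p\times p$ blocks $B_{i,j}$, where $B_{i,j}$ is the submatrix formed by rows $(i-1)p+1,\dots,ip$ and columns $(j-1)p+1,\dots,jp$. Such a matrix is called block invertible (with block size $p$) if every block $B_{i,j}$ is invertible. An $n\times n$ matrix is an $(n,p)$ block invertible square matrix if it is block invertible with block size $p$ and is itself invertible. *)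

theory Defs
  imports "Jordan_Normal_Form.Matrix"
begin

definition blk :: "'a mat \<Rightarrow> nat \<Rightarrow> nat \<Rightarrow> nat \<Rightarrow> 'a mat" where
  "blk A p i j = mat p p (\<lambda>(r, c). A $$ (i * p + r, j * p + c))"

definition block_invertible :: "nat \<Rightarrow> 'a :: semiring_1 mat \<Rightarrow> bool" where
  "block_invertible p A \<longleftrightarrow> p dvd dim_row A \<and> p dvd dim_col A \<and>
     (\<forall>i < dim_row A div p. \<forall>j < dim_col A div p. invertible_mat (blk A p i j))"

definition block_inv_square :: "nat \<Rightarrow> nat \<Rightarrow> 'a :: semiring_1 mat \<Rightarrow> bool" where
  "block_inv_square n p A \<longleftrightarrow> A \<in> carrier_mat n n \<and> block_invertible p A \<and> invertible_mat A"

definition mat_inv :: "'a :: semiring_1 mat \<Rightarrow> 'a mat" where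
  "mat_inv A = (SOME B. inverts_mat A B \<and> inverts_mat B A)"

end

theory Submission
  imports Defs "Jordan_Normal_Form.Determinant"
begin


lemma inv_det:
  fixes A :: "'a::field mat"
  assumes A: "A \<in> carrier_mat n n"
  shows "invertible_mat A \<longleftrightarrow> det A \<noteq> 0"
proof
  assume "invertible_mat A"
  then obtain B where AB: "A * B = 1\<^sub>m n" and BA: "B * A = 1\<^sub>m (dim_row B)"
    using A unfolding invertible_mat_def inverts_mat_def by auto
  have "dim_col B = n" using arg_cong[OF AB, of dim_col] by simp
  moreover have "dim_row B = n" using arg_cong[OF BA, of dim_col] A by simp
  ultimately have B: "B \<in> carrier_mat n n" by auto
  from arg_cong[OF AB, of det] det_mult[OF A B] show "det A \<noteq> 0" by auto
next
  assume "det A \<noteq> 0"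
  from det_non_zero_imp_unit[OF A this, of undefined]
  obtain B where B: "B \<in> carrier_mat n n" and "A * B = 1\<^sub>m n" "B * A = 1\<^sub>m n"
    unfolding Units_def ring_mat_def by auto
  thus "invertible_mat A" using A unfolding invertible_mat_def inverts_mat_def square_mat.simps
    by (intro conjI exI[of _ B]) auto
qed

lemma det2:
  fixes A :: "'a::field mat"
  assumes A: "A \<in> carrier_mat 2 2"
  shows "det A = A$$(0,0)*A$$(1,1) - A$$(0,1)*A$$(1,0)"
proof -
  obtain A1 A2 A3 A4 where s: "split_block A 1 1 = (A1,A2,A3,A4)" by (cases "split_block A 1 1") auto
  have d: "dim_row A = 1 + 1" "dim_col A = 1 + 1" using A by auto
  note sb = split_block[OF s d]
  have c: "A3 * A4 = A4 * A3"
    using sb by (intro eq_matI) (auto simp: scalar_prod_def)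
  have "det A = det (A1 * A4 - A2 * A3)"
    using det_four_block_mat[OF sb(1-4) c] sb(5) by simp
  also have "\<dots> = (A1 * A4 - A2 * A3) $$ (0,0)"
    by (rule det_single, insert sb, auto)
  also have "\<dots> = A$$(0,0)*A$$(1,1) - A$$(0,1)*A$$(1,0)"
    using sb s unfolding split_block_def Let_def by (auto simp: scalar_prod_def)
  finally show ?thesis .
qed

definition m22 :: "'a::zero \<Rightarrow> 'a \<Rightarrow> 'a \<Rightarrow> 'a \<Rightarrow> 'a mat" where
  "m22 a b c d = mat 2 2 (\<lambda>(i,j). if i = 0 then (if j = 0 then a else b) else (if j = 0 then c else d))"

lemma m22_carrier[simp]: "m22 a b c d \<in> carrier_mat 2 2" unfolding m22_def by auto

lemma det_m22[simp]: "det (m22 a b c (d::'a::field)) = a * d - b * c"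
  by (subst det2[of _], auto simp: m22_def)

lemma m22_eq: "S \<in> carrier_mat 2 2 \<Longrightarrow> S = m22 (S$$(0,0)) (S$$(0,1)) (S$$(1,0)) (S$$(1,1))"
  by (rule eq_matI, auto simp: m22_def less_2_cases_iff)

lemma m22_add[simp]: "m22 a b c d + m22 a' b' c' d' = m22 (a+a') (b+b') (c+c') (d+d')"
  by (rule eq_matI, auto simp: m22_def less_2_cases_iff)

lemma claim2:
  fixes S :: "'a::field mat"
  assumes S: "S \<in> carrier_mat 2 2"
  shows "\<exists>W \<in> carrier_mat 2 2. det W \<noteq> 0 \<and> det (S + W) \<noteq> 0"
proof -
  define a b c d where "a = S$$(0,0)" "b = S$$(0,1)" "c = S$$(1,0)" "d = S$$(1,1)"
  have Se: "S = m22 a b c d" using m22_eq[OF S] a_b_c_d_def by simp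
  show ?thesis
  proof (cases "a \<noteq> 0")
    case True
    define e where "e = d - ((1-b)*(1-c)+1)/a"
    show ?thesis
      by (rule bexI[of _ "m22 (-a) (1-b) (1-c) (e-d)"], unfold Se, insert True, auto simp: e_def field_simps)
  next
    case a: False
    show ?thesis
    proof (cases "b \<noteq> 0")
      case True
      show ?thesis
        by (rule bexI[of _ "m22 1 0 (d/b-c) 1"], unfold Se, insert True a, auto simp: field_simps)
    next
      case b: False
      show ?thesis
      proof (cases "c \<noteq> 0")
        case True
        show ?thesis
          by (rule bexI[of _ "m22 1 (d/c) 0 1"], unfold Se, insert True a b, auto simp: field_simps)
      next
        case False
        show ?thesis
          by (rule bexI[of _ "m22 0 1 1 1"], unfold Se, insert False a b, auto simp: field_simps)
      qed
    qed
  qed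
qed

definition good :: "nat \<Rightarrow> 'a::field mat \<Rightarrow> bool" where
  "good n S \<longleftrightarrow> (\<exists>W \<in> carrier_mat n n. det W \<noteq> 0 \<and> det (S + W) \<noteq> 0)"

lemma good_transfer:
  fixes S P :: "'a::field mat"
  assumes S: "S \<in> carrier_mat n n" and P: "P \<in> carrier_mat n n" and dP: "det P \<noteq> 0"
    and g: "good n (P * S)"
  shows "good n S"
proof -
  obtain W' where W': "W' \<in> carrier_mat n n" and d1: "det W' \<noteq> 0" and d2: "det (P * S + W') \<noteq> 0"
    using g unfolding good_def by auto
  from dP inv_det[OF P] obtain Q where QP: "Q * P = 1\<^sub>m n" and PQ: "P * Q = 1\<^sub>m n"
    and Q: "Q \<in> carrier_mat n n"
    using det_non_zero_imp_unit[OF P dP, of undefined] unfolding Units_def ring_mat_def by auto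
  have dQ: "det Q \<noteq> 0" using arg_cong[OF QP, of det] det_mult[OF Q P] by auto
  have "Q * (P * S + W') = Q * (P * S) + Q * W'"
    using S P Q W' by (metis mult_add_distrib_mat mult_carrier_mat)
  also have "Q * (P * S) = (Q * P) * S" using S P Q by (simp add: assoc_mult_mat)
  also have "\<dots> = S" using QP S by simp
  finally have "Q * (P * S + W') = S + Q * W'" .
  hence "det (S + Q * W') = det Q * det (P * S + W')"
    using det_mult[OF Q, of "P * S + W'"] S P W' by auto
  thus ?thesis unfolding good_def using dQ d1 d2 det_mult[OF Q W'] Q W'
    by (intro bexI[of _ "Q * W'"]) auto
qed

lemma reduce00:
  fixes S :: "'a::field mat"
  assumes S: "S \<in> carrier_mat n n" and n: "2 \<le> n"
  shows "\<exists>P \<in> carrier_mat n n. det P \<noteq> 0 \<and> (P * S) $$ (0,0) = 0"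
proof (cases "S $$ (1,0) = 0")
  case True
  have "swaprows_mat n 0 1 * S = swaprows 0 1 S" using swaprows_mat[OF S, of 0 1] n by auto
  moreover have "swaprows 0 1 S $$ (0,0) = 0" using True S n by auto
  ultimately show ?thesis using det_swaprows_mat[of 0 n 1, where 'a='a] n
    by (intro bexI[of _ "swaprows_mat n 0 1"]) auto
next
  case False
  define a where "a = - S$$(0,0) / S$$(1,0)"
  have "addrow_mat n a 0 1 * S = addrow a 0 1 S" using addrow_mat[OF S, of 1 a 0] n by auto
  moreover have "addrow a 0 1 S $$ (0,0) = 0" using False S n by (auto simp: a_def)
  ultimately show ?thesis using det_addrow_mat[of 0 1 n a] n
    by (intro bexI[of _ "addrow_mat n a 0 1"]) auto
qed

lemma good_step:
  fixes S :: "'a::field mat"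
  assumes S: "S \<in> carrier_mat (Suc n) (Suc n)" and S0: "S $$ (0,0) = 0"
    and IH: "\<And>D :: 'a mat. D \<in> carrier_mat n n \<Longrightarrow> good n D"
  shows "good (Suc n) S"
proof -
  obtain A B C D where s: "split_block S 1 1 = (A,B,C,D)" by (cases "split_block S 1 1") auto
  have d: "dim_row S = 1 + n" "dim_col S = 1 + n" using S by auto
  note sb = split_block[OF s d]
  obtain W4 where W4: "W4 \<in> carrier_mat n n" "det W4 \<noteq> 0" "det (D + W4) \<noteq> 0"
    using IH[OF sb(4)] unfolding good_def by auto
  define W where "W = four_block_mat (1\<^sub>m 1) (0\<^sub>m 1 n) (- C) W4"
  have Wc: "W \<in> carrier_mat (Suc n) (Suc n)" unfolding W_def using W4 by auto
  have dW: "det W = det W4" unfolding W_def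
    by (subst det_four_block_mat_upper_right_zero[of _ 1 _ n], insert W4 sb, auto)
  have A0: "A $$ (0,0) = 0" using s S0 unfolding split_block_def Let_def by auto
  have SW: "S + W = four_block_mat (A + 1\<^sub>m 1) B (0\<^sub>m n 1) (D + W4)"
    unfolding W_def sb(5)
    by (subst add_four_block_mat[of _ 1 1 _ n _ n], insert sb W4, auto)
  have dA: "det (A + 1\<^sub>m 1) = 1"
    by (subst det_single, insert sb A0, auto)
  have "det (S + W) = det (D + W4)" unfolding SW
    by (subst det_four_block_mat_lower_left_zero[of _ 1 _ n], insert W4 sb dA, auto)
  thus ?thesis unfolding good_def using Wc dW W4 by (intro bexI[of _ W]) auto
qed

lemma good_all:
  fixes S :: "'a::field mat"
  assumes "2 \<le> n" "S \<in> carrier_mat n n"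
  shows "good n S"
  using assms
proof (induction n arbitrary: S rule: nat_induct_at_least)
  case base
  then show ?case using claim2 unfolding good_def by auto
next
  case (Suc n)
  obtain P where P: "P \<in> carrier_mat (Suc n) (Suc n)" "det P \<noteq> 0" "(P * S) $$ (0,0) = 0"
    using reduce00[OF Suc.prems] Suc.hyps by auto
  have "good (Suc n) (P * S)"
    by (rule good_step, insert P Suc, auto)
  thus ?case using good_transfer[OF Suc.prems P(1,2)] by auto
qed


lemma blk_eq:
  fixes M :: "'a::field mat"
  assumes M: "M \<in> carrier_mat t t" and Y: "Y \<in> carrier_mat t p" and X: "X \<in> carrier_mat p t"
    and D: "D \<in> carrier_mat p p" and t: "t = k * p" and i: "i \<le> k" and j: "j \<le> k"
  shows "blk (four_block_mat M Y X D) p i j = (if i < k then if j < k then blk M p i j else blk Y p i 0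
     else if j < k then blk X p 0 j else D)"
proof -
  have lt: "a * p + r < t" if "a < k" "r < p" for a r
  proof -
    have "a * p + r < a * p + p" using that by simp
    also have "\<dots> = Suc a * p" by simp
    also have "\<dots> \<le> k * p" using that by (intro mult_right_mono) auto
    finally show ?thesis using t by simp
  qed
  have lt2: "a * p + r < t + p" if "a \<le> k" "r < p" for a r
  proof -
    have "a * p \<le> k * p" using that by (intro mult_right_mono) auto
    thus ?thesis using that t by linarith
  qed
  have ik: "i < k \<Longrightarrow> r < p \<Longrightarrow> i * p + r < t" for r using lt by auto
  have jk: "j < k \<Longrightarrow> r < p \<Longrightarrow> j * p + r < t" for r using lt by auto
  have ik3: "r < p \<Longrightarrow> i * p + r < t + p" for r using lt2 i by auto
  have jk3: "r < p \<Longrightarrow> j * p + r < t + p" for r using lt2 j by auto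
  have idx: "four_block_mat M Y X D $$ (i*p+r, j*p+c) = (if i*p+r < t then if j*p+c < t then M$$(i*p+r,j*p+c) else Y$$(i*p+r, j*p+c-t)
      else if j*p+c<t then X$$(i*p+r-t, j*p+c) else D$$(i*p+r-t, j*p+c-t))" if "r < p" "c < p" for r c
    using ik3[OF that(1)] jk3[OF that(2)] M D by simp
  have ik2: "\<not> i < k \<Longrightarrow> r < p \<Longrightarrow> \<not> i * p + r < t \<and> i * p + r - t = r" for r using i t by auto
  have jk2: "\<not> j < k \<Longrightarrow> r < p \<Longrightarrow> \<not> j * p + r < t \<and> j * p + r - t = r" for r using j t by auto
  have dims: "dim_row (blk A p a b) = p" "dim_col (blk A p a b) = p" for A :: "'a mat" and a b
    unfolding blk_def by auto
  show ?thesis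
  proof (cases "i < k")
    case iT: True
    show ?thesis
    proof (cases "j < k")
      case True
      show ?thesis using iT True
        by (intro eq_matI) (simp_all add: dims idx ik jk, simp_all add: blk_def idx ik jk)
    next
      case False
      show ?thesis using iT False
        by (intro eq_matI) (simp_all add: dims idx ik jk2, simp_all add: blk_def idx ik jk2)
    qed
  next
    case iF: False
    show ?thesis
    proof (cases "j < k")
      case True
      show ?thesis using iF True
        by (intro eq_matI) (simp_all add: dims idx ik2 jk, simp_all add: blk_def idx ik2 jk)
    next
      case False
      show ?thesis using iF False D
        by (intro eq_matI) (simp_all add: dims idx ik2 jk2, simp_all add: blk_def idx ik2 jk2)
    qed
  qed
qed

theorem mainTheorem3:
  fixes M X Y :: "'a :: field mat" and t p :: nat
  assumes "0 < t" and "0 < p" and "p dvd t"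
    and "M \<in> carrier_mat t t" and "X \<in> carrier_mat p t" and "Y \<in> carrier_mat t p"
    and "block_inv_square t p M"
    and "block_invertible p X" and "block_invertible p Y"
  shows "(\<forall>W \<in> carrier_mat p p. invertible_mat W \<and> invertible_mat (X * mat_inv M * Y + W) \<longrightarrow>
            block_inv_square (t + p) p (four_block_mat M Y X (X * mat_inv M * Y + W)))
       \<and> (1 < p \<longrightarrow> (\<exists>W \<in> carrier_mat p p. invertible_mat W \<and> invertible_mat (X * mat_inv M * Y + W)))"
proof -
  note Mc = assms(4) and Xc = assms(5) and Yc = assms(6)
  define Mi where "Mi = mat_inv M"
  have invM: "invertible_mat M" using assms(7) unfolding block_inv_square_def by auto
  then obtain B where "inverts_mat M B \<and> inverts_mat B M" unfolding invertible_mat_def by auto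
  hence "inverts_mat M Mi \<and> inverts_mat Mi M" unfolding Mi_def mat_inv_def by (rule someI)
  hence MMi: "M * Mi = 1\<^sub>m t" and MiM: "Mi * M = 1\<^sub>m (dim_row Mi)"
    using Mc unfolding inverts_mat_def by auto
  have "dim_col Mi = t" using arg_cong[OF MMi, of dim_col] by simp
  moreover have "dim_row Mi = t" using arg_cong[OF MiM, of dim_col] Mc by simp
  ultimately have Mic: "Mi \<in> carrier_mat t t" by auto
  with MiM have MiM: "Mi * M = 1\<^sub>m t" by auto
  have dM: "det M \<noteq> 0" using invM inv_det[OF Mc] by auto
  have part1: "block_inv_square (t + p) p (four_block_mat M Y X (X * Mi * Y + W))"
    if Wc: "W \<in> carrier_mat p p" and iW: "invertible_mat W" and iD: "invertible_mat (X * Mi * Y + W)" for W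
  proof -
    define D where "D = X * Mi * Y + W"
    have Dc: "D \<in> carrier_mat p p" unfolding D_def using Xc Mic Yc Wc by auto
    define N where "N = four_block_mat M Y X D"
    have Nc: "N \<in> carrier_mat (t + p) (t + p)" unfolding N_def using Mc Dc by auto
    define L where "L = four_block_mat (1\<^sub>m t) (0\<^sub>m t p) (- (X * Mi)) (1\<^sub>m p)"
    have Lc: "L \<in> carrier_mat (t + p) (t + p)" unfolding L_def by auto
    have XMi: "X * Mi \<in> carrier_mat p t" using Xc Mic by auto
    have c1: "- (X * Mi) * M + 1\<^sub>m p * X = 0\<^sub>m p t"
    proof -
      have "- (X * Mi) * M = - (X * Mi * M)" by (rule uminus_mult_left_mat) (use XMi Mc in auto)
      also have "X * Mi * M = X * (Mi * M)" using Xc Mic Mc by (simp add: assoc_mult_mat)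
      also have "\<dots> = X" using MiM Xc by simp
      finally show ?thesis using Xc by simp
    qed
    have c2: "- (X * Mi) * Y + 1\<^sub>m p * D = W"
    proof -
      have "- (X * Mi) * Y = - (X * Mi * Y)" by (rule uminus_mult_left_mat) (use XMi Yc in auto)
      hence "- (X * Mi) * Y + 1\<^sub>m p * D = - (X * Mi * Y) + (X * Mi * Y + W)"
        using left_mult_one_mat[OF Dc] unfolding D_def by simp
      also have "\<dots> = (- (X * Mi * Y) + X * Mi * Y) + W"
        using XMi Yc Wc by (subst assoc_add_mat[of _ p p], auto)
      also have "- (X * Mi * Y) + X * Mi * Y = 0\<^sub>m p p" by (rule uminus_l_inv_mat) (use XMi Yc in auto)
      also have "0\<^sub>m p p + W = W" using Wc by simp
      finally show ?thesis .
    qed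
    have "L * N = four_block_mat (1\<^sub>m t * M + 0\<^sub>m t p * X) (1\<^sub>m t * Y + 0\<^sub>m t p * D)
        (- (X * Mi) * M + 1\<^sub>m p * X) (- (X * Mi) * Y + 1\<^sub>m p * D)"
      unfolding L_def N_def
      by (rule mult_four_block_mat[OF one_carrier_mat zero_carrier_mat uminus_carrier_mat[OF XMi] one_carrier_mat Mc Yc Xc Dc])
    also have "\<dots> = four_block_mat M Y (0\<^sub>m p t) W"
    proof -
      have "1\<^sub>m t * M + 0\<^sub>m t p * X = M" using Mc Xc by simp
      moreover have "1\<^sub>m t * Y + 0\<^sub>m t p * D = Y" using Yc Dc by simp
      ultimately show ?thesis unfolding c1 c2 by simp
    qed
    finally have LN: "L * N = four_block_mat M Y (0\<^sub>m p t) W" .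
    have dL: "det L = 1" unfolding L_def
      using det_four_block_mat_upper_right_zero[OF one_carrier_mat refl uminus_carrier_mat[OF XMi] one_carrier_mat]
      by simp
    have "det (L * N) = det M * det W" unfolding LN
      by (rule det_four_block_mat_lower_left_zero[OF Mc Yc refl Wc])
    hence dN: "det N = det M * det W" using det_mult[OF Lc Nc] dL by simp
    have dW: "det W \<noteq> 0" using iW inv_det[OF Wc] by auto
    have iN: "invertible_mat N" using inv_det[OF Nc] dN dM dW by simp
    obtain k where t: "t = k * p" using assms(3) by (metis dvd_def mult.commute)
    have kp: "(t + p) div p = Suc k" using t assms(2) by simp
    have tk: "t div p = k" using t assms(2) by simp
    have bM: "invertible_mat (blk M p i j)" if "i < k" "j < k" for i j
      using assms(7) that carrier_matD[OF Mc] tk unfolding block_inv_square_def block_invertible_def by auto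
    have bY: "invertible_mat (blk Y p i 0)" if "i < k" for i
      using assms(9) that carrier_matD[OF Yc] tk assms(2) unfolding block_invertible_def by auto
    have bX: "invertible_mat (blk X p 0 j)" if "j < k" for j
      using assms(8) that carrier_matD[OF Xc] tk assms(2) unfolding block_invertible_def by auto
    have iD': "invertible_mat D" using iD unfolding D_def .
    have "block_invertible p N"
      unfolding block_invertible_def
    proof (intro conjI allI impI)
      show "p dvd dim_row N" "p dvd dim_col N" using Nc assms(3) by auto
      fix i j assume i: "i < dim_row N div p" and j: "j < dim_col N div p"
      hence i': "i \<le> k" and j': "j \<le> k" using Nc kp by auto
      show "invertible_mat (blk N p i j)"
        unfolding N_def blk_eq[OF Mc Yc Xc Dc t i' j'] using bM bY bX iD' i' j' by auto
    qed
    thus ?thesis using Nc iN unfolding block_inv_square_def N_def D_def by auto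
  qed
  have part2: "\<exists>W \<in> carrier_mat p p. invertible_mat W \<and> invertible_mat (X * Mi * Y + W)"
    if p: "1 < p"
  proof -
    have Sc: "X * Mi * Y \<in> carrier_mat p p" using Xc Mic Yc by auto
    from good_all[OF _ Sc] p obtain W where W: "W \<in> carrier_mat p p" "det W \<noteq> 0"
      "det (X * Mi * Y + W) \<noteq> 0" unfolding good_def by auto
    thus ?thesis using inv_det[OF W(1)] inv_det[of "X * Mi * Y + W" p] Sc by auto
  qed
  show ?thesis using part1 part2 unfolding Mi_def by auto
qed

end
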